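(* Let $\Gamma$ be a nonempty set and $\mathcal{S}$ a family of subsets of $\Gamma$ containing all singletons of $\Gamma$. For $s\in\mathcal{S}$ let $s^*\in J\mathcal{S}^*$ be the functional determined by $s^*(\phi)=\sum_{a\in s}\phi(a)$ for finitely supported $\phi$, and let $D=\{\sum_{i=1}^n\lambda_i s_i^*: n\in\mathbb{N},\ \lambda_i\in\mathbb{R},\ s_i\in\mathcal{S},\ s_1,\dots,s_n \text{ pairwise disjoint},\ \sum_{i=1}^n\lambda_i^2\le1\}$. Then the $w^*$-closure of $D$ contains all extreme points of the closed unit ball of $J\mathcal{S}^*$.
   Context: For a finitely supported function $\phi:\Gamma\to\mathbb{R}$, the James-$\mathcal{S}$ norm is $\|\phi\|=\sup\big(\sum_{i=1}^n(\sum_{a\in s_i}\phi(a))^2\big)^{1/2}$, the supremum over all finite families of pairwise disjoint elements $s_1,\dots,s_n$ of $\mathcal{S}$; $J\mathcal{S}$ is the completion of the finitely supported real functions on $\Gamma$ in this norm. One has $\|s^*\|\le1$ and $D$ lies in the unit ball of $J\mathcal{S}^*$. *)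

theory Defs
  imports "HOL-Analysis.Analysis"
begin

text \<open>The index set Gamma is the (nonempty) type 'a.  Finitely supported functions.\<close>
definition supp :: "('a \<Rightarrow> real) \<Rightarrow> 'a set" where
  "supp \<phi> = {a. \<phi> a \<noteq> 0}"

definition fin_supp :: "('a \<Rightarrow> real) \<Rightarrow> bool" where
  "fin_supp \<phi> \<longleftrightarrow> finite (supp \<phi>)"

definition setsum :: "('a \<Rightarrow> real) \<Rightarrow> 'a set \<Rightarrow> real" where
  "setsum \<phi> s = sum \<phi> (s \<inter> supp \<phi>)"

definition js_norm :: "'a set set \<Rightarrow> ('a \<Rightarrow> real) \<Rightarrow> real" where
  "js_norm S \<phi> = sqrt (Sup {(\<Sum>i<n. (setsum \<phi> (s i))\<^sup>2) | (n::nat) s.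
       (\<forall>i<n. s i \<in> S) \<and> (\<forall>i<n. \<forall>j<n. i \<noteq> j \<longrightarrow> s i \<inter> s j = {})})"

text \<open>A functional f on JS is identified with g a = f(e_a); then f(phi) = pairing g phi for
  finitely supported phi, and g determines f since finitely supported functions are dense. \<close>
definition pairing :: "('a \<Rightarrow> real) \<Rightarrow> ('a \<Rightarrow> real) \<Rightarrow> real" where
  "pairing g \<phi> = sum (\<lambda>a. g a * \<phi> a) (supp \<phi>)"

definition dual_ball :: "'a set set \<Rightarrow> ('a \<Rightarrow> real) set" where
  "dual_ball S = {g. \<forall>\<phi>. fin_supp \<phi> \<longrightarrow> \<bar>pairing g \<phi>\<bar> \<le> js_norm S \<phi>}"

text \<open>s* corresponds to the indicator function of s.  The set D: \<close>
definition D_set :: "'a set set \<Rightarrow> ('a \<Rightarrow> real) set" where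
  "D_set S = {(\<lambda>a. \<Sum>i<n. lam i * indicator (s i) a) | (n::nat) lam s.
       (\<forall>i<n. s i \<in> S) \<and> (\<forall>i<n. \<forall>j<n. i \<noteq> j \<longrightarrow> s i \<inter> s j = {}) \<and>
       (\<Sum>i<n. (lam i)\<^sup>2) \<le> 1}"

definition extreme_pt :: "('a \<Rightarrow> real) \<Rightarrow> ('a \<Rightarrow> real) set \<Rightarrow> bool" where
  "extreme_pt x K \<longleftrightarrow> x \<in> K \<and>
     (\<forall>y\<in>K. \<forall>z\<in>K. \<forall>t::real. 0 < t \<and> t < 1 \<and> x = (\<lambda>a. t * y a + (1 - t) * z a)
        \<longrightarrow> y = x \<and> z = x)"

text \<open>weak-star closure: on bounded subsets of JS* (D lies in the dual unit ball) the weak-star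
  topology coincides with pointwise convergence on Gamma, i.e. the product topology on 'a => real.\<close>

end

theory Submission
  imports Defs
begin

lemma compact_imp_closed_fun:
  fixes M :: "('a \<Rightarrow> real) set"
  assumes "compact M" shows "closed M"
proof -
  have H: "Hausdorff_space (product_topology (\<lambda>i::'a. (euclidean::real topology)) UNIV)"
    by (metis Hausdorff_space_euclidean Hausdorff_space_product_topology)
  have "compactin (product_topology (\<lambda>i::'a. (euclidean::real topology)) UNIV) M"
    using assms by (simp add: euclidean_product_topology)
  then have "closedin (product_topology (\<lambda>i::'a. (euclidean::real topology)) UNIV) M"
    using H compactin_imp_closedin by blast
  then show ?thesis by (simp add: euclidean_product_topology)
qed

definition cvx :: "('a \<Rightarrow> real) set \<Rightarrow> bool" where
  "cvx M \<longleftrightarrow> (\<forall>x\<in>M. \<forall>y\<in>M. \<forall>t::real. 0 \<le> t \<and> t \<le> 1 \<longrightarrow> (\<lambda>a. t * x a + (1 - t) * y a) \<in> M)"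

definition JX :: "'a set set \<Rightarrow> ('a \<Rightarrow> real) \<Rightarrow> real set" where
  "JX S \<phi> = {(\<Sum>i<n. (setsum \<phi> (s i))\<^sup>2) | (n::nat) s.
       (\<forall>i<n. s i \<in> S) \<and> (\<forall>i<n. \<forall>j<n. i \<noteq> j \<longrightarrow> s i \<inter> s j = {})}"

lemma js_norm_JX: "js_norm S \<phi> = sqrt (Sup (JX S \<phi>))"
  unfolding js_norm_def JX_def ..

lemma JX_bound:
  assumes "fin_supp \<phi>" "x \<in> JX S \<phi>"
  shows "x \<le> (\<Sum>a\<in>supp \<phi>. \<bar>\<phi> a\<bar>)\<^sup>2"
proof -
  let ?P = "supp \<phi>"
  let ?T = "\<Sum>a\<in>?P. \<bar>\<phi> a\<bar>"
  have fP: "finite ?P" using assms(1) by (simp add: fin_supp_def)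
  obtain n :: nat and s where x: "x = (\<Sum>i<n. (setsum \<phi> (s i))\<^sup>2)"
    and sS: "\<forall>i<n. s i \<in> S" and dj: "\<forall>i<n. \<forall>j<n. i \<noteq> j \<longrightarrow> s i \<inter> s j = {}"
    using assms(2) unfolding JX_def by blast
  define c where "c i = (\<Sum>a\<in>s i \<inter> ?P. \<bar>\<phi> a\<bar>)" for i
  have c1: "\<bar>setsum \<phi> (s i)\<bar> \<le> c i" for i
    unfolding setsum_def c_def by (rule sum_abs)
  have c2: "c i \<le> ?T" for i
    unfolding c_def by (rule sum_mono2) (use fP in auto)
  have "(\<Sum>i<n. c i) = (\<Sum>a\<in>(\<Union>i\<in>{..<n}. s i \<inter> ?P). \<bar>\<phi> a\<bar>)"
    unfolding c_def
    by (subst sum.UNION_disjoint) (use fP dj in auto)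
  also have "\<dots> \<le> ?T" by (rule sum_mono2) (use fP in auto)
  finally have c3: "(\<Sum>i<n. c i) \<le> ?T" .
  have "x \<le> (\<Sum>i<n. c i * ?T)"
    unfolding x
  proof (rule sum_mono)
    fix i
    have "(setsum \<phi> (s i))\<^sup>2 = \<bar>setsum \<phi> (s i)\<bar> * \<bar>setsum \<phi> (s i)\<bar>"
      by (simp add: power2_eq_square)
    also have "\<dots> \<le> c i * ?T"
      using c1[of i] c2[of i] by (intro mult_mono) auto
    finally show "(setsum \<phi> (s i))\<^sup>2 \<le> c i * ?T" .
  qed
  also have "\<dots> = (\<Sum>i<n. c i) * ?T" by (simp add: sum_distrib_right)
  also have "\<dots> \<le> ?T * ?T"
    using c3 by (intro mult_right_mono) auto
  finally show ?thesis by (simp add: power2_eq_square)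
qed

lemma JX_bdd: "fin_supp \<phi> \<Longrightarrow> bdd_above (JX S \<phi>)"
  using JX_bound unfolding bdd_above_def by blast

lemma JX_ne: "0 \<in> JX S \<phi>"
  unfolding JX_def by (rule CollectI, rule exI[of _ 0]) auto

lemma pairing_D:
  assumes "fin_supp \<phi>"
  shows "pairing (\<lambda>a. \<Sum>i<n. lam i * indicator (s i) a) \<phi> = (\<Sum>i<n. lam i * setsum \<phi> (s i))"
proof -
  have fP: "finite (supp \<phi>)" using assms by (simp add: fin_supp_def)
  have "pairing (\<lambda>a. \<Sum>i<n. lam i * indicator (s i) a) \<phi>
      = (\<Sum>i<n. lam i * (\<Sum>a\<in>supp \<phi>. indicator (s i) a * \<phi> a))"
    unfolding pairing_def by (simp add: sum_distrib_right sum_distrib_left mult.assoc sum.swap[of _ "supp \<phi>"])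
  also have "\<dots> = (\<Sum>i<n. lam i * setsum \<phi> (s i))"
  proof (rule sum.cong[OF refl])
    fix i
    have "(\<Sum>a\<in>supp \<phi>. indicator (s i) a * \<phi> a) = (\<Sum>a\<in>supp \<phi> \<inter> s i. \<phi> a)"
      by (subst sum.inter_restrict[OF fP]) (auto simp add: indicator_def intro!: sum.cong)
    then show "lam i * (\<Sum>a\<in>supp \<phi>. indicator (s i) a * \<phi> a) = lam i * setsum \<phi> (s i)"
      by (simp add: setsum_def Int_commute)
  qed
  finally show ?thesis .
qed

lemma D_sub_B: "D_set S \<subseteq> dual_ball S"
proof
  fix d assume "d \<in> D_set S"
  then obtain n :: nat and lam s where d: "d = (\<lambda>a. \<Sum>i<n. lam i * indicator (s i) a)"
    and sS: "\<forall>i<n. s i \<in> S" and dj: "\<forall>i<n. \<forall>j<n. i \<noteq> j \<longrightarrow> s i \<inter> s j = {}"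
    and l: "(\<Sum>i<n. (lam i)\<^sup>2) \<le> 1"
    unfolding D_set_def by blast
  show "d \<in> dual_ball S"
    unfolding dual_ball_def
  proof (intro CollectI allI impI)
    fix \<phi> :: "'a \<Rightarrow> real" assume f: "fin_supp \<phi>"
    define c where "c i = setsum \<phi> (s i)" for i
    have p: "pairing d \<phi> = (\<Sum>i<n. lam i * c i)"
      unfolding d c_def by (rule pairing_D[OF f])
    have "(\<Sum>i<n. lam i * c i)\<^sup>2 \<le> (\<Sum>i<n. (lam i)\<^sup>2) * (\<Sum>i<n. (c i)\<^sup>2)"
      by (rule Cauchy_Schwarz_ineq_sum)
    also have "\<dots> \<le> 1 * (\<Sum>i<n. (c i)\<^sup>2)"
      using l by (intro mult_right_mono) (auto intro: sum_nonneg)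
    finally have cs: "(pairing d \<phi>)\<^sup>2 \<le> (\<Sum>i<n. (c i)\<^sup>2)" using p by simp
    have inJ: "(\<Sum>i<n. (c i)\<^sup>2) \<in> JX S \<phi>"
      unfolding JX_def c_def using sS dj by blast
    have "(\<Sum>i<n. (c i)\<^sup>2) \<le> Sup (JX S \<phi>)"
      by (rule cSup_upper[OF inJ JX_bdd[OF f]])
    with cs have "(pairing d \<phi>)\<^sup>2 \<le> Sup (JX S \<phi>)" by linarith
    then have "sqrt ((pairing d \<phi>)\<^sup>2) \<le> sqrt (Sup (JX S \<phi>))"
      by (rule real_sqrt_le_mono)
    then show "\<bar>pairing d \<phi>\<bar> \<le> js_norm S \<phi>"
      by (simp add: js_norm_JX)
  qed
qed

lemma norm_attained:
  assumes f: "fin_supp \<phi>" and v: "\<forall>d\<in>D_set S. pairing d \<phi> \<le> v"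
  shows "js_norm S \<phi> \<le> v"
proof -
  have "(\<lambda>a. \<Sum>i<(0::nat). (\<lambda>_. 0) i * indicator ((\<lambda>_. {}) i) a) \<in> D_set S"
    unfolding D_set_def by (rule CollectI, intro exI[of _ "0::nat"]) auto
  then have "pairing (\<lambda>a. 0) \<phi> \<le> v" using v by simp
  then have v0: "0 \<le> v" by (simp add: pairing_def)
  have "Sup (JX S \<phi>) \<le> v\<^sup>2"
  proof (rule cSup_least)
    show "JX S \<phi> \<noteq> {}" using JX_ne by blast
  next
    fix x assume "x \<in> JX S \<phi>"
    then obtain n :: nat and s where x: "x = (\<Sum>i<n. (setsum \<phi> (s i))\<^sup>2)"
      and sS: "\<forall>i<n. s i \<in> S" and dj: "\<forall>i<n. \<forall>j<n. i \<noteq> j \<longrightarrow> s i \<inter> s j = {}"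
      unfolding JX_def by blast
    define c where "c i = setsum \<phi> (s i)" for i
    have x0: "0 \<le> x" unfolding x by (auto intro: sum_nonneg)
    define N where "N = sqrt x"
    show "x \<le> v\<^sup>2"
    proof (cases "N = 0")
      case True then have "x = 0" using x0 unfolding N_def by simp
      then show ?thesis by simp
    next
      case False
      then have Npos: "N > 0" unfolding N_def using x0 by simp
      have NN: "N * N = x" unfolding N_def using x0 by simp
      have xpos: "x > 0" using NN Npos by (metis mult_pos_pos)
      define lam where "lam i = c i / N" for i
      have "(\<Sum>i<n. (lam i)\<^sup>2) = (\<Sum>i<n. (c i)\<^sup>2) / (N * N)"
        unfolding lam_def by (simp add: power_divide sum_divide_distrib power2_eq_square)
      also have "\<dots> = 1" using NN xpos unfolding x c_def by simp
      finally have l: "(\<Sum>i<n. (lam i)\<^sup>2) \<le> 1" by simp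
      have "(\<lambda>a. \<Sum>i<n. lam i * indicator (s i) a) \<in> D_set S"
        unfolding D_set_def using sS dj l by blast
      then have "pairing (\<lambda>a. \<Sum>i<n. lam i * indicator (s i) a) \<phi> \<le> v" using v by blast
      then have "(\<Sum>i<n. lam i * c i) \<le> v" unfolding pairing_D[OF f] c_def .
      moreover have "(\<Sum>i<n. lam i * c i) = N"
      proof -
        have "(\<Sum>i<n. lam i * c i) = (\<Sum>i<n. (c i)\<^sup>2) / N"
          unfolding lam_def by (simp add: sum_divide_distrib power2_eq_square)
        also have "\<dots> = N" using NN Npos unfolding x c_def by (simp add: field_simps)
        finally show ?thesis .
      qed
      ultimately have "N \<le> v" by simp
      then have "N * N \<le> v * v" using Npos by (intro mult_mono) auto
      then show ?thesis using NN by (simp add: power2_eq_square)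
    qed
  qed
  then have "sqrt (Sup (JX S \<phi>)) \<le> sqrt (v\<^sup>2)" by (rule real_sqrt_le_mono)
  then show ?thesis using v0 by (simp add: js_norm_JX)
qed

lemma closed_B: "closed (dual_ball S)"
proof -
  have "dual_ball S = (\<Inter>\<phi>\<in>{\<phi>. fin_supp \<phi>}. {g. \<bar>pairing g \<phi>\<bar> \<le> js_norm S \<phi>})"
    unfolding dual_ball_def by auto
  moreover have "closed {g. \<bar>pairing g \<phi>\<bar> \<le> js_norm S \<phi>}" for \<phi>
    unfolding pairing_def
    by (intro closed_Collect_le continuous_intros continuous_on_product_then_coordinatewise continuous_on_id)
  ultimately show ?thesis by auto
qed

lemma pairing_comb:
  "pairing (\<lambda>a. t * x a + u * y a) \<phi> = t * pairing x \<phi> + u * pairing y \<phi>"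
  unfolding pairing_def by (simp add: algebra_simps sum.distrib sum_distrib_left)

lemma cvx_B: "cvx (dual_ball S)"
  unfolding cvx_def
proof (intro ballI allI impI)
  fix x y and t :: real
  assume x: "x \<in> dual_ball S" and y: "y \<in> dual_ball S" and t: "0 \<le> t \<and> t \<le> 1"
  show "(\<lambda>a. t * x a + (1 - t) * y a) \<in> dual_ball S"
    unfolding dual_ball_def
  proof (intro CollectI allI impI)
    fix \<phi> :: "'a \<Rightarrow> real" assume f: "fin_supp \<phi>"
    have a: "\<bar>pairing x \<phi>\<bar> \<le> js_norm S \<phi>" "\<bar>pairing y \<phi>\<bar> \<le> js_norm S \<phi>"
      using x y f unfolding dual_ball_def by auto
    have "\<bar>t * pairing x \<phi> + (1 - t) * pairing y \<phi>\<bar> \<le> t * \<bar>pairing x \<phi>\<bar> + (1 - t) * \<bar>pairing y \<phi>\<bar>"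
      using t by (metis abs_mult abs_of_nonneg abs_triangle_ineq diff_ge_0_iff_ge)
    also have "\<dots> \<le> t * js_norm S \<phi> + (1 - t) * js_norm S \<phi>"
      using a t by (intro add_mono mult_left_mono) auto
    moreover have "pairing (\<lambda>a. t * x a + (1 - t) * y a) \<phi> = t * pairing x \<phi> + (1 - t) * pairing y \<phi>"
      by (rule pairing_comb)
    ultimately show "\<bar>pairing (\<lambda>a. t * x a + (1 - t) * y a) \<phi>\<bar> \<le> js_norm S \<phi>"
      by (simp add: algebra_simps)
  qed
qed

lemma B_cube: "g \<in> dual_ball S \<Longrightarrow> \<bar>g a\<bar> \<le> 1"
proof -
  assume g: "g \<in> dual_ball S"
  define e where "e = (\<lambda>b. if b = a then 1 else (0::real))"
  have se: "supp e = {a}" unfolding e_def supp_def by auto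
  have f: "fin_supp e" unfolding fin_supp_def se by simp
  have pe: "pairing g e = g a" unfolding pairing_def se by (simp add: e_def)
  have "Sup (JX S e) \<le> 1"
  proof (rule cSup_least)
    show "JX S e \<noteq> {}" using JX_ne by blast
  next
    fix x assume "x \<in> JX S e"
    from JX_bound[OF f this] show "x \<le> 1" unfolding se by (simp add: e_def)
  qed
  then have "js_norm S e \<le> 1" unfolding js_norm_JX by simp
  moreover have "\<bar>pairing g e\<bar> \<le> js_norm S e" using g f unfolding dual_ball_def by auto
  ultimately show ?thesis using pe by simp
qed

lemma compact_B: "compact (dual_ball S)"
proof -
  have "compactin (product_topology (\<lambda>i::'a. (euclidean::real topology)) UNIV) (PiE UNIV (\<lambda>_. {-1..1}))"
    by (simp add: compactin_PiE)
  then have c: "compact (PiE UNIV (\<lambda>_::'a. {-1..(1::real)}))"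
    by (simp add: euclidean_product_topology)
  have "dual_ball S = PiE UNIV (\<lambda>_. {-1..1}) \<inter> dual_ball S"
    using B_cube by (fastforce simp: abs_le_iff)
  then show ?thesis using compact_Int_closed[OF c closed_B[of S]] by simp
qed

lemma open_box:
  fixes U :: "('a \<Rightarrow> real) set"
  assumes "open U" "g \<in> U"
  shows "\<exists>F \<epsilon>. finite F \<and> \<epsilon> > 0 \<and> {x. \<forall>a\<in>F. \<bar>x a - g a\<bar> < \<epsilon>} \<subseteq> U"
proof -
  have "openin (product_topology (\<lambda>i::'a. (euclidean::real topology)) UNIV) U"
    using assms(1) unfolding open_fun_def .
  from product_topology_open_contains_basis[OF this assms(2)]
  obtain X where X: "g \<in> PiE UNIV X" "\<And>i. open (X i)" "finite {i. X i \<noteq> UNIV}"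
    "PiE UNIV X \<subseteq> U"
    by auto
  define F where "F = {i. X i \<noteq> UNIV}"
  have "\<forall>i. \<exists>e>0. \<forall>y. \<bar>y - g i\<bar> < e \<longrightarrow> y \<in> X i"
  proof
    fix i
    have "g i \<in> X i" using X(1) by auto
    with X(2)[of i] obtain e where "e > 0" "ball (g i) e \<subseteq> X i"
      using open_contains_ball by blast
    then show "\<exists>e>0. \<forall>y. \<bar>y - g i\<bar> < e \<longrightarrow> y \<in> X i"
    proof (intro exI[of _ e] conjI allI impI)
      fix y assume "\<bar>y - g i\<bar> < e"
      then have "y \<in> ball (g i) e" by (simp add: dist_real_def abs_minus_commute[of y])
      then show "y \<in> X i" using \<open>ball (g i) e \<subseteq> X i\<close> by blast
    qed (rule \<open>e > 0\<close>)
  qed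
  then have "\<exists>e. \<forall>i. e i > 0 \<and> (\<forall>y. \<bar>y - g i\<bar> < e i \<longrightarrow> y \<in> X i)" by (rule choice)
  then obtain e where e0: "\<forall>i. e i > 0 \<and> (\<forall>y. \<bar>y - g i\<bar> < e i \<longrightarrow> y \<in> X i)" by blast
  have e: "\<And>i. e i > 0" "\<And>i y. \<bar>y - g i\<bar> < e i \<Longrightarrow> y \<in> X i" using e0 by auto
  define \<epsilon> where "\<epsilon> = Min (insert 1 (e ` F))"
  have fF: "finite F" using X(3) by (simp add: F_def)
  have epos: "\<epsilon> > 0" unfolding \<epsilon>_def using fF e(1) by auto
  have ele: "\<epsilon> \<le> e i" if "i \<in> F" for i
    unfolding \<epsilon>_def using fF that by auto
  have "{x. \<forall>a\<in>F. \<bar>x a - g a\<bar> < \<epsilon>} \<subseteq> PiE UNIV X"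
  proof
    fix x assume x: "x \<in> {x. \<forall>a\<in>F. \<bar>x a - g a\<bar> < \<epsilon>}"
    have "x i \<in> X i" for i
    proof (cases "i \<in> F")
      case True
      then show ?thesis using x ele[OF True] e(2)[of "x i" i] by auto
    next
      case False then show ?thesis by (simp add: F_def)
    qed
    then show "x \<in> PiE UNIV X" unfolding PiE_UNIV_domain by (rule Pi_I)
  qed
  then have sub: "{x. \<forall>a\<in>F. \<bar>x a - g a\<bar> < \<epsilon>} \<subseteq> U" using X(4) by (rule order_trans)
  show ?thesis by (intro exI[of _ F] exI[of _ \<epsilon>] conjI fF epos sub)
qed

lemma pairing_F:
  assumes "finite F" "supp \<phi> \<subseteq> F"
  shows "pairing x \<phi> = (\<Sum>a\<in>F. x a * \<phi> a)"
  unfolding pairing_def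
  by (rule sum.mono_neutral_left) (use assms in \<open>auto simp: supp_def\<close>)

lemma D_ne: "(\<lambda>a. 0) \<in> D_set S"
proof -
  have "(\<lambda>a. \<Sum>i<(0::nat). (\<lambda>_. 0) i * indicator ((\<lambda>_. {}) i) a) \<in> D_set S"
    unfolding D_set_def by (rule CollectI, intro exI[of _ "0::nat"]) auto
  then show ?thesis by simp
qed

lemma aux1: "((t::real) * x + (1 - t) * p - h)\<^sup>2 = (p - h)\<^sup>2 + t * (2 * ((x - p) * (p - h))) + t * (t * (x - p)\<^sup>2)"
  by (simp add: power2_eq_square algebra_simps)
lemma aux2: "(h::real) * (h - p) - p * (h - p) = (p - h)\<^sup>2"
  by (simp add: power2_eq_square algebra_simps)
lemma aux3: "(p::real) * (h - p) - x * (h - p) = (x - p) * (p - h)"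
  by (simp add: algebra_simps)

lemma aux4: "(s::real) * (t1 * y1 + (1 - t1) * c1) + (1 - s) * (t2 * y2 + (1 - t2) * c2) = s * t1 * y1 + (1 - s) * t2 * y2 + (s * (1 - t1) * c1 + (1 - s) * (1 - t2) * c2)"
  by (simp add: algebra_simps)

lemma separation:
  assumes M: "compact M" "cvx M" "D_set S \<subseteq> M"
  shows "dual_ball S \<subseteq> M"
proof
  fix h assume hB: "h \<in> dual_ball S"
  show "h \<in> M"
  proof (rule ccontr)
    assume hM: "h \<notin> M"
    have "open (- M)" using compact_imp_closed_fun[OF M(1)] by (simp add: open_Compl)
    then obtain F \<epsilon> where F: "finite F" "\<epsilon> > 0" "{x. \<forall>a\<in>F. \<bar>x a - h a\<bar> < \<epsilon>} \<subseteq> - M"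
      using open_box[of "- M" h] hM by blast
    define q where "q x = (\<Sum>a\<in>F. (x a - h a)\<^sup>2)" for x :: "'a \<Rightarrow> real"
    have cq: "continuous_on M q" unfolding q_def
      by (intro continuous_intros continuous_on_product_then_coordinatewise continuous_on_id)
    have "M \<noteq> {}" using M(3) D_ne by blast
    then obtain p where pM: "p \<in> M" and pmin: "\<And>y. y \<in> M \<Longrightarrow> q p \<le> q y"
      using continuous_attains_inf[OF M(1) _ cq] by blast
    have qpos: "q p > 0"
    proof (rule ccontr)
      assume "\<not> q p > 0"
      moreover have "q p \<ge> 0" unfolding q_def by (auto intro: sum_nonneg)
      ultimately have "q p = 0" by linarith
      then have "\<forall>a\<in>F. (p a - h a)\<^sup>2 = 0" unfolding q_def using F(1)
        by (subst (asm) sum_nonneg_eq_0_iff) auto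
      then have "p \<in> {x. \<forall>a\<in>F. \<bar>x a - h a\<bar> < \<epsilon>}" using F(2) by auto
      then show False using F(3) pM by blast
    qed
    have var: "(\<Sum>a\<in>F. (x a - p a) * (p a - h a)) \<ge> 0" if xM: "x \<in> M" for x
    proof (rule ccontr)
      define A where "A = (\<Sum>a\<in>F. (x a - p a) * (p a - h a))"
      define Bq where "Bq = (\<Sum>a\<in>F. (x a - p a)\<^sup>2)"
      assume "\<not> 0 \<le> (\<Sum>a\<in>F. (x a - p a) * (p a - h a))"
      then have An: "A < 0" unfolding A_def by simp
      have Bq0: "Bq \<ge> 0" unfolding Bq_def by (auto intro: sum_nonneg)
      have key: "0 \<le> 2 * A + t * Bq" if t: "0 < t" "t \<le> 1" for t
      proof -
        have "(\<lambda>a. t * x a + (1 - t) * p a) \<in> M" using M(2) xM pM t unfolding cvx_def by auto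
        then have "q p \<le> q (\<lambda>a. t * x a + (1 - t) * p a)" by (rule pmin)
        also have "q (\<lambda>a. t * x a + (1 - t) * p a) = (\<Sum>a\<in>F. (p a - h a)\<^sup>2 + t * (2 * ((x a - p a) * (p a - h a))) + t * (t * (x a - p a)\<^sup>2))"
          unfolding q_def by (intro sum.cong refl) (rule aux1)
        also have "\<dots> = q p + t * (2 * A) + t * (t * Bq)"
          unfolding q_def A_def Bq_def by (simp add: sum.distrib sum_distrib_left)
        finally have "0 \<le> t * (2 * A + t * Bq)" by (simp add: algebra_simps)
        then show ?thesis using t by (simp add: zero_le_mult_iff)
      qed
      show False
      proof (cases "Bq = 0")
        case True then show False using key[of 1, OF zero_less_one order_refl] An by linarith
      next
        case False
        then have Bp: "Bq > 0" using Bq0 by simp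
        define t where "t = min 1 (- A / Bq)"
        have t0: "0 < t" "t \<le> 1" unfolding t_def using An Bp by (auto simp: divide_less_0_iff)
        have "t * Bq \<le> (- A / Bq) * Bq" unfolding t_def using Bp
          by (intro mult_right_mono) auto
        also have "\<dots> = - A" using Bp by simp
        finally show False using key[OF t0] An by linarith
      qed
    qed
    define \<phi> where "\<phi> a = (if a \<in> F then h a - p a else 0)" for a
    have sF: "supp \<phi> \<subseteq> F" unfolding supp_def \<phi>_def by auto
    have f: "fin_supp \<phi>" unfolding fin_supp_def using sF F(1) finite_subset by blast
    have pF: "pairing x \<phi> = (\<Sum>a\<in>F. x a * (h a - p a))" for x
      unfolding pairing_F[OF F(1) sF] by (rule sum.cong) (auto simp: \<phi>_def)
    have le: "pairing x \<phi> \<le> pairing p \<phi>" if "x \<in> M" for x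
    proof -
      have "pairing p \<phi> - pairing x \<phi> = (\<Sum>a\<in>F. (x a - p a) * (p a - h a))"
        unfolding pF sum_subtractf[symmetric] by (intro sum.cong refl) (rule aux3)
      then show ?thesis using var[OF that] by simp
    qed
    have "pairing h \<phi> - pairing p \<phi> = q p"
      unfolding pF q_def sum_subtractf[symmetric] by (intro sum.cong refl) (rule aux2)
    then have lt: "pairing p \<phi> < pairing h \<phi>" using qpos by simp
    have "js_norm S \<phi> \<le> pairing p \<phi>"
      using norm_attained[OF f] le M(3) by blast
    moreover have "\<bar>pairing h \<phi>\<bar> \<le> js_norm S \<phi>" using hB f unfolding dual_ball_def by auto
    ultimately show False using lt by simp
  qed
qed

lemma cvx_empty: "cvx {}" unfolding cvx_def by auto

lemma cvx_Int: "cvx A \<Longrightarrow> cvx B \<Longrightarrow> cvx (A \<inter> B)" unfolding cvx_def by auto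

lemma abs_comb_le:
  fixes t u v \<delta> :: real
  assumes "0 \<le> t" "t \<le> 1" "\<bar>u\<bar> \<le> \<delta>" "\<bar>v\<bar> \<le> \<delta>"
  shows "\<bar>t * u + (1 - t) * v\<bar> \<le> \<delta>"
proof -
  have "\<bar>t * u + (1 - t) * v\<bar> \<le> \<bar>t * u\<bar> + \<bar>(1 - t) * v\<bar>" by (rule abs_triangle_ineq)
  also have "\<dots> = t * \<bar>u\<bar> + (1 - t) * \<bar>v\<bar>" using assms(1,2) by (simp add: abs_mult)
  also have "\<dots> \<le> t * \<delta> + (1 - t) * \<delta>"
    using assms by (intro add_mono mult_left_mono) auto
  finally show ?thesis by (simp add: algebra_simps)
qed

lemma cvx_box: "cvx {x. \<forall>a\<in>F. \<bar>x a - d a\<bar> \<le> \<delta>}"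
  unfolding cvx_def
proof (intro ballI allI impI)
  fix x y and t :: real
  assume x: "x \<in> {x. \<forall>a\<in>F. \<bar>x a - d a\<bar> \<le> \<delta>}" and y: "y \<in> {x. \<forall>a\<in>F. \<bar>x a - d a\<bar> \<le> \<delta>}"
    and t: "0 \<le> t \<and> t \<le> 1"
  show "(\<lambda>a. t * x a + (1 - t) * y a) \<in> {x. \<forall>a\<in>F. \<bar>x a - d a\<bar> \<le> \<delta>}"
  proof (intro CollectI ballI)
    fix a assume a: "a \<in> F"
    have "t * x a + (1 - t) * y a - d a = t * (x a - d a) + (1 - t) * (y a - d a)"
      by (simp add: algebra_simps)
    moreover have "\<bar>t * (x a - d a) + (1 - t) * (y a - d a)\<bar> \<le> \<delta>"
      using x y a t by (intro abs_comb_le) auto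
    ultimately show "\<bar>t * x a + (1 - t) * y a - d a\<bar> \<le> \<delta>" by simp
  qed
qed

lemma closed_box: "closed {x::'a\<Rightarrow>real. \<forall>a\<in>F. \<bar>x a - d a\<bar> \<le> \<delta>}"
proof -
  have "{x::'a\<Rightarrow>real. \<forall>a\<in>F. \<bar>x a - d a\<bar> \<le> \<delta>} = (\<Inter>a\<in>F. {x. \<bar>x a - d a\<bar> \<le> \<delta>})"
    by auto
  moreover have "closed {x::'a\<Rightarrow>real. \<bar>x a - d a\<bar> \<le> \<delta>}" for a
    by (intro closed_Collect_le continuous_intros continuous_on_product_then_coordinatewise continuous_on_id)
  ultimately show ?thesis by auto
qed

lemma open_obox: "open {x::'a\<Rightarrow>real. \<forall>a\<in>F. \<bar>x a - d a\<bar> < \<delta>}" if "finite F"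
proof -
  have "open {x::'a\<Rightarrow>real. \<forall>a\<in>F. x (id a) \<in> {d a - \<delta> <..< d a + \<delta>}}"
    by (rule product_topology_basis') (use that in auto)
  moreover have "{x::'a\<Rightarrow>real. \<forall>a\<in>F. x (id a) \<in> {d a - \<delta> <..< d a + \<delta>}} = {x. \<forall>a\<in>F. \<bar>x a - d a\<bar> < \<delta>}"
    by (auto simp: abs_less_iff)
  ultimately show ?thesis by simp
qed

definition comb :: "real \<times> ('a \<Rightarrow> real) \<times> ('a \<Rightarrow> real) \<Rightarrow> 'a \<Rightarrow> real" where
  "comb z = (\<lambda>a. fst z * fst (snd z) a + (1 - fst z) * snd (snd z) a)"

lemma continuous_comb: "continuous_on X comb"
  unfolding comb_def
  by (intro continuous_intros continuous_on_product_then_coordinatewise continuous_on_id)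

lemma hull_step:
  assumes M: "compact M" "cvx M" "M \<subseteq> B" and C: "compact C" "cvx C" "C \<subseteq> B" and B: "cvx B"
  shows "\<exists>M'. compact M' \<and> cvx M' \<and> M \<subseteq> M' \<and> C \<subseteq> M' \<and> M' \<subseteq> B \<and>
     (\<forall>x\<in>M'. extreme_pt x B \<longrightarrow> x \<in> M \<or> x \<in> C)"
proof (cases "M = {} \<or> C = {}")
  case True
  then show ?thesis
  proof
    assume "M = {}" then show ?thesis using C by (intro exI[of _ C]) auto
  next
    assume "C = {}" then show ?thesis using M by (intro exI[of _ M]) auto
  qed
next
  case False
  then obtain m0 c0 where m0: "m0 \<in> M" and c0: "c0 \<in> C" by blast
  define M' where "M' = comb ` ({0..1} \<times> M \<times> C)"
  have memI: "w \<in> M'" if "t \<in> {0..1}" "y \<in> M" "c \<in> C" "w = comb (t, y, c)" for w t y c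
    unfolding M'_def using that by blast
  have memE: "\<exists>t y c. t \<in> {0..1} \<and> y \<in> M \<and> c \<in> C \<and> w = comb (t, y, c)" if "w \<in> M'" for w
  proof -
    from that obtain z where z: "z \<in> {0..1} \<times> M \<times> C" "w = comb z" unfolding M'_def by blast
    then show ?thesis by (cases z) auto
  qed
  have cM': "compact M'" unfolding M'_def
    by (intro compact_continuous_image continuous_comb compact_Times compact_Icc M C)
  have MM': "M \<subseteq> M'"
  proof
    fix y assume "y \<in> M" then show "y \<in> M'"
      by (intro memI[of 1 y c0]) (auto simp: comb_def c0)
  qed
  have CM': "C \<subseteq> M'"
  proof
    fix c assume "c \<in> C" then show "c \<in> M'"
      by (intro memI[of 0 m0 c]) (auto simp: comb_def m0)
  qed
  have M'B: "M' \<subseteq> B"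
  proof
    fix w assume "w \<in> M'"
    then obtain t y c where "t \<in> {0..1}" "y \<in> M" "c \<in> C" "w = comb (t, y, c)"
      using memE by blast
    moreover have "\<forall>x\<in>B. \<forall>y\<in>B. \<forall>t. 0 \<le> t \<and> t \<le> 1 \<longrightarrow> (\<lambda>a. t * x a + (1 - t) * y a) \<in> B"
      using B unfolding cvx_def .
    ultimately show "w \<in> B" using M(3) C(3) unfolding comb_def by auto
  qed
  have extr: "x \<in> M \<or> x \<in> C" if xM': "x \<in> M'" "extreme_pt x B" for x
  proof -
    obtain t y c where t: "t \<in> {0..1}" and y: "y \<in> M" and c: "c \<in> C" and x: "x = comb (t, y, c)"
      using memE[OF xM'(1)] by blast
    show ?thesis
    proof (cases "t = 0 \<or> t = 1")
      case True then show ?thesis using x y c by (auto simp: comb_def)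
    next
      case False
      then have "0 < t" "t < 1" using t by auto
      moreover have "x = (\<lambda>a. t * y a + (1 - t) * c a)" using x by (simp add: comb_def)
      ultimately have "y = x" using xM'(2) y c M C unfolding extreme_pt_def by blast
      then show ?thesis using y by simp
    qed
  qed
  have cvM': "cvx M'"
    unfolding cvx_def
  proof (intro ballI allI impI)
    fix z1 z2 and s :: real
    assume z1: "z1 \<in> M'" and z2: "z2 \<in> M'" and s: "0 \<le> s \<and> s \<le> 1"
    obtain t1 y1 c1 where t1: "t1 \<in> {0..1}" and y1: "y1 \<in> M" and c1: "c1 \<in> C" and e1: "z1 = comb (t1, y1, c1)"
      using memE[OF z1] by blast
    obtain t2 y2 c2 where t2: "t2 \<in> {0..1}" and y2: "y2 \<in> M" and c2: "c2 \<in> C" and e2: "z2 = comb (t2, y2, c2)"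
      using memE[OF z2] by blast
    define T where "T = s * t1 + (1 - s) * t2"
    have st1: "0 \<le> s * t1" "0 \<le> (1 - s) * t2" "0 \<le> s * (1 - t1)" "0 \<le> (1 - s) * (1 - t2)"
      using s t1 t2 by auto
    have omT: "1 - T = s * (1 - t1) + (1 - s) * (1 - t2)" unfolding T_def by (simp add: algebra_simps)
    have T01: "0 \<le> T" "T \<le> 1" using omT st1 unfolding T_def by linarith+
    have z: "(\<lambda>a. s * z1 a + (1 - s) * z2 a) = (\<lambda>a. s * t1 * y1 a + (1 - s) * t2 * y2 a + (s * (1 - t1) * c1 a + (1 - s) * (1 - t2) * c2 a))"
      unfolding e1 e2 comb_def by (rule ext) (simp only: fst_conv snd_conv aux4)
    show "(\<lambda>a. s * z1 a + (1 - s) * z2 a) \<in> M'"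
    proof (cases "T = 0")
      case True
      then have a: "s * t1 = 0" "(1 - s) * t2 = 0" using st1 unfolding T_def by linarith+
      have cC: "(\<lambda>a. s * c1 a + (1 - s) * c2 a) \<in> C" using C(2) c1 c2 s unfolding cvx_def by auto
      have b: "s * (1 - t1) = s" "(1 - s) * (1 - t2) = 1 - s"
        using a by (simp_all add: right_diff_distrib)
      have "(\<lambda>a. s * t1 * y1 a + (1 - s) * t2 * y2 a + (s * (1 - t1) * c1 a + (1 - s) * (1 - t2) * c2 a))
          = comb (0, m0, \<lambda>a. s * c1 a + (1 - s) * c2 a)"
        unfolding comb_def by (rule ext) (simp only: fst_conv snd_conv a b, simp)
      note eq = this
      show ?thesis unfolding z by (rule memI[OF _ m0 cC eq]) simp
    next
      case TF: False
      show ?thesis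
      proof (cases "T = 1")
        case True
        then have a: "s * (1 - t1) = 0" "(1 - s) * (1 - t2) = 0" using st1 omT by linarith+
        have yM: "(\<lambda>a. s * y1 a + (1 - s) * y2 a) \<in> M" using M(2) y1 y2 s unfolding cvx_def by auto
        have b: "s * t1 = s" "(1 - s) * t2 = 1 - s"
          using a by (simp_all add: right_diff_distrib)
        have "(\<lambda>a. s * t1 * y1 a + (1 - s) * t2 * y2 a + (s * (1 - t1) * c1 a + (1 - s) * (1 - t2) * c2 a))
          = comb (1, \<lambda>a. s * y1 a + (1 - s) * y2 a, c0)"
          unfolding comb_def by (rule ext) (simp only: fst_conv snd_conv a b, simp)
        note eq = this
        show ?thesis unfolding z by (rule memI[OF _ yM c0 eq]) simp
      next
        case False
        have Tp: "0 < T" "T < 1" using T01 TF False by auto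
        define \<alpha> where "\<alpha> = s * t1 / T"
        define \<beta> where "\<beta> = s * (1 - t1) / (1 - T)"
        have le1: "s * t1 \<le> T" unfolding T_def using st1 by linarith
        have le2: "s * (1 - t1) \<le> 1 - T" using omT st1 by linarith
        have \<alpha>01: "0 \<le> \<alpha>" "\<alpha> \<le> 1" unfolding \<alpha>_def using Tp st1 le1
          by (auto simp: divide_le_eq_1)
        have \<beta>01: "0 \<le> \<beta>" "\<beta> \<le> 1" unfolding \<beta>_def using Tp st1 le2
          by (auto simp: divide_le_eq_1)
        have yM: "(\<lambda>a. \<alpha> * y1 a + (1 - \<alpha>) * y2 a) \<in> M" using M(2) y1 y2 \<alpha>01 unfolding cvx_def by auto
        have cC: "(\<lambda>a. \<beta> * c1 a + (1 - \<beta>) * c2 a) \<in> C" using C(2) c1 c2 \<beta>01 unfolding cvx_def by auto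
        have e1a: "T * \<alpha> = s * t1" unfolding \<alpha>_def using Tp by simp
        have e1b: "T * (1 - \<alpha>) = (1 - s) * t2"
        proof -
          have "T * (1 - \<alpha>) = T - T * \<alpha>" by (simp add: right_diff_distrib)
          also have "\<dots> = T - s * t1" by (simp only: e1a)
          also have "\<dots> = (1 - s) * t2" unfolding T_def by simp
          finally show ?thesis .
        qed
        have e2a: "(1 - T) * \<beta> = s * (1 - t1)" unfolding \<beta>_def using Tp by simp
        have e2b: "(1 - T) * (1 - \<beta>) = (1 - s) * (1 - t2)"
        proof -
          have "(1 - T) * (1 - \<beta>) = (1 - T) - (1 - T) * \<beta>" by (simp add: right_diff_distrib)
          also have "\<dots> = (1 - T) - s * (1 - t1)" by (simp only: e2a)
          also have "\<dots> = (1 - s) * (1 - t2)" unfolding omT by simp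
          finally show ?thesis .
        qed
        have "(\<lambda>a. s * t1 * y1 a + (1 - s) * t2 * y2 a + (s * (1 - t1) * c1 a + (1 - s) * (1 - t2) * c2 a))
          = comb (T, (\<lambda>a. \<alpha> * y1 a + (1 - \<alpha>) * y2 a), (\<lambda>a. \<beta> * c1 a + (1 - \<beta>) * c2 a))"
          unfolding comb_def
        proof (rule ext, simp only: fst_conv snd_conv)
          fix a
          have h1: "T * (\<alpha> * y1 a + (1 - \<alpha>) * y2 a) + (1 - T) * (\<beta> * c1 a + (1 - \<beta>) * c2 a)
              = (T * \<alpha>) * y1 a + (T * (1 - \<alpha>)) * y2 a + (((1 - T) * \<beta>) * c1 a + ((1 - T) * (1 - \<beta>)) * c2 a)"
            by (simp add: algebra_simps)
          have h2: "(T * \<alpha>) * y1 a + (T * (1 - \<alpha>)) * y2 a + (((1 - T) * \<beta>) * c1 a + ((1 - T) * (1 - \<beta>)) * c2 a)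
              = s * t1 * y1 a + (1 - s) * t2 * y2 a + (s * (1 - t1) * c1 a + (1 - s) * (1 - t2) * c2 a)"
            unfolding e1a e1b e2a e2b ..
          show "s * t1 * y1 a + (1 - s) * t2 * y2 a + (s * (1 - t1) * c1 a + (1 - s) * (1 - t2) * c2 a) =
              T * (\<alpha> * y1 a + (1 - \<alpha>) * y2 a) + (1 - T) * (\<beta> * c1 a + (1 - \<beta>) * c2 a)"
            by (rule sym, rule trans[OF h1 h2])
        qed
        note eq = this
        show ?thesis unfolding z by (rule memI[OF _ yM cC eq]) (use Tp in auto)
      qed
    qed
  qed
  show ?thesis using cM' cvM' MM' CM' M'B extr by blast
qed

theorem lemma2p3:
  fixes S :: "'a set set"
  assumes "\<forall>a. {a} \<in> S"
  shows "{g. extreme_pt g (dual_ball S)} \<subseteq> closure (D_set S)"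
proof
  fix g assume "g \<in> {g. extreme_pt g (dual_ball S)}"
  then have ge: "extreme_pt g (dual_ball S)" by simp
  then have gB: "g \<in> dual_ball S" unfolding extreme_pt_def by simp
  show "g \<in> closure (D_set S)"
  proof (rule ccontr)
    assume gn: "g \<notin> closure (D_set S)"
    have "open (- closure (D_set S))" by (simp add: open_Compl)
    then obtain F \<epsilon> where F: "finite F" "\<epsilon> > 0"
      "{x. \<forall>a\<in>F. \<bar>x a - g a\<bar> < \<epsilon>} \<subseteq> - closure (D_set S)"
      using open_box[of "- closure (D_set S)" g] gn by blast
    define \<delta> where "\<delta> = \<epsilon> / 2"
    have \<delta>: "\<delta> > 0" "\<delta> < \<epsilon>" using F(2) by (auto simp: \<delta>_def)
    define K where "K = closure (D_set S)"
    have KB: "K \<subseteq> dual_ball S" unfolding K_def by (rule closure_minimal[OF D_sub_B closed_B])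
    have "K = dual_ball S \<inter> K" using KB by blast
    then have cK: "compact K" using compact_Int_closed[OF compact_B[of S] closed_closure[of "D_set S"]]
      unfolding K_def by simp
    define Ob where "Ob d = {x::'a\<Rightarrow>real. \<forall>a\<in>F. \<bar>x a - d a\<bar> < \<delta>}" for d
    have oO: "open (Ob d)" for d unfolding Ob_def by (rule open_obox[OF F(1)])
    have cov: "K \<subseteq> (\<Union>d\<in>D_set S. Ob d)"
    proof
      fix x assume "x \<in> K"
      then have xc: "x \<in> closure (D_set S)" by (simp add: K_def)
      have "x \<in> Ob x" using \<delta> by (auto simp: Ob_def)
      note xin = this
      have "\<forall>A. \<forall>T\<subseteq>A. open T \<longrightarrow> x \<in> T \<longrightarrow> D_set S \<inter> A \<noteq> {}"
        using xc unfolding closure_iff_nhds_not_empty .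
      then have "\<forall>T\<subseteq>Ob x. open T \<longrightarrow> x \<in> T \<longrightarrow> D_set S \<inter> Ob x \<noteq> {}" by (rule spec)
      then have "D_set S \<inter> Ob x \<noteq> {}" using oO[of x] xin by blast
      then obtain d where d: "d \<in> D_set S" "d \<in> Ob x" by blast
      have "x \<in> Ob d" unfolding Ob_def
      proof (intro CollectI ballI)
        fix a assume "a \<in> F"
        then have "\<bar>d a - x a\<bar> < \<delta>" using d(2) unfolding Ob_def by blast
        then show "\<bar>x a - d a\<bar> < \<delta>" by (simp add: abs_minus_commute[of "x a" "d a"])
      qed
      then show "x \<in> (\<Union>d\<in>D_set S. Ob d)" using d(1) by blast
    qed
    obtain J where J: "J \<subseteq> D_set S" "finite J" "K \<subseteq> (\<Union>d\<in>J. Ob d)"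
      using compactE_image[OF cK oO cov] by blast
    define C where "C d = dual_ball S \<inter> {x. \<forall>a\<in>F. \<bar>x a - d a\<bar> \<le> \<delta>}" for d
    have cC: "compact (C d)" "cvx (C d)" "C d \<subseteq> dual_ball S" for d
      unfolding C_def
      using compact_Int_closed[OF compact_B[of S] closed_box] cvx_Int[OF cvx_B cvx_box] by auto
    have ind: "\<exists>M. compact M \<and> cvx M \<and> (\<forall>d\<in>J'. C d \<subseteq> M) \<and> M \<subseteq> dual_ball S \<and>
        (\<forall>x\<in>M. extreme_pt x (dual_ball S) \<longrightarrow> (\<exists>d\<in>J'. x \<in> C d))" if "finite J'" for J'
      using that
    proof (induction J' rule: finite_induct)
      case empty
      show ?case by (intro exI[of _ "{}"]) (auto simp: cvx_empty)
    next
      case (insert d J')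
      then obtain M where M: "compact M" "cvx M" "\<forall>d\<in>J'. C d \<subseteq> M" "M \<subseteq> dual_ball S"
        "\<forall>x\<in>M. extreme_pt x (dual_ball S) \<longrightarrow> (\<exists>d\<in>J'. x \<in> C d)" by blast
      obtain M' where M': "compact M'" "cvx M'" "M \<subseteq> M'" "C d \<subseteq> M'" "M' \<subseteq> dual_ball S"
        "\<forall>x\<in>M'. extreme_pt x (dual_ball S) \<longrightarrow> x \<in> M \<or> x \<in> C d"
        using hull_step[OF M(1) M(2) M(4) cC(1)[of d] cC(2)[of d] cC(3)[of d] cvx_B] by blast
      show ?case
      proof (intro exI[of _ M'] conjI)
        show "\<forall>d'\<in>insert d J'. C d' \<subseteq> M'" using M(3) M'(3,4) by blast
        show "\<forall>x\<in>M'. extreme_pt x (dual_ball S) \<longrightarrow> (\<exists>d'\<in>insert d J'. x \<in> C d')"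
          using M(5) M'(6) by blast
      qed (use M' in auto)
    qed
    obtain M where M: "compact M" "cvx M" "\<forall>d\<in>J. C d \<subseteq> M" "M \<subseteq> dual_ball S"
        "\<forall>x\<in>M. extreme_pt x (dual_ball S) \<longrightarrow> (\<exists>d\<in>J. x \<in> C d)"
      using ind[OF J(2)] by blast
    have DM: "D_set S \<subseteq> M"
    proof
      fix d' assume d': "d' \<in> D_set S"
      then have "d' \<in> K" unfolding K_def using closure_subset by blast
      then obtain d where d: "d \<in> J" "d' \<in> Ob d" using J(3) by blast
      have "d' \<in> dual_ball S" using d' D_sub_B by blast
      then have "d' \<in> C d" using d(2) unfolding C_def Ob_def by (auto intro: less_imp_le)
      then show "d' \<in> M" using M(3) d(1) by blast
    qed
    have "g \<in> M" using separation[OF M(1) M(2) DM] gB by blast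
    then obtain d where d: "d \<in> J" "g \<in> C d" using M(5) ge by blast
    have "\<forall>a\<in>F. \<bar>d a - g a\<bar> < \<epsilon>"
    proof
      fix a assume "a \<in> F"
      then have "\<bar>g a - d a\<bar> \<le> \<delta>" using d(2) unfolding C_def by blast
      moreover have "\<bar>d a - g a\<bar> = \<bar>g a - d a\<bar>" by (rule abs_minus_commute)
      ultimately show "\<bar>d a - g a\<bar> < \<epsilon>" using \<delta> by linarith
    qed
    then have "d \<in> {x. \<forall>a\<in>F. \<bar>x a - g a\<bar> < \<epsilon>}" by simp
    then have "d \<in> - closure (D_set S)" using F(3) by (rule subsetD[rotated])
    then have "d \<notin> closure (D_set S)" by simp
    moreover have "d \<in> closure (D_set S)" using d(1) J(1) closure_subset by blast
    ultimately show False by blast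
  qed
qed

end
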